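(* Let $A$ be a finite abelian group. A subgroup inclusion $X\subseteq A$ is a cellular cover of $A$ if and only if $X$ is the $k$-torsion subgroup $\{x\in A: kx=0\}$ of $A$ for some positive integer $k$. Moreover every cellular cover of $A$ is equivalent to such an inclusion, so $\mathrm{Cov}(A)$ is in bijection with the set of subgroups of $A$ of the form $\{x\in A:kx=0\}$, $k\ge1$.
   Context: A cellular cover of $A$ is a homomorphism $c:X\to A$ such that $\mathrm{Hom}(X,X)\to\mathrm{Hom}(X,A)$, $f\mapsto cf$, is bijective; two cellular covers $c:X\to A$, $d:Y\to A$ are equivalent if $dh=c$ for some isomorphism $h:X\to Y$, and $\mathrm{Cov}(A)$ is the set of equivalence classes. (For finitely generated nilpotent groups such covers are injective, so they are equivalent to subgroup inclusions.) *)

theory Defs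
  imports "HOL-Algebra.Algebra"
begin

text \<open>Since HOL-Algebra homomorphisms are arbitrary
  functions (not extensional), homomorphisms are identified with their restriction
  to the carrier of B, i.e. we work with the extensional homomorphisms.\<close>
definition cellular_cover ::
  "('b, 'm) monoid_scheme \<Rightarrow> ('a, 'n) monoid_scheme \<Rightarrow> ('b \<Rightarrow> 'a) \<Rightarrow> bool" where
  "cellular_cover B A c \<longleftrightarrow>
     c \<in> hom B A \<and>
     bij_betw (\<lambda>f. restrict (\<lambda>x. c (f x)) (carrier B))
       (hom B B \<inter> extensional (carrier B))
       (hom B A \<inter> extensional (carrier B))"

definition torsion_subgroup :: "('a, 'n) monoid_scheme \<Rightarrow> nat \<Rightarrow> 'a set" where
  "torsion_subgroup A k = {x \<in> carrier A. x [^]\<^bsub>A\<^esub> k = \<one>\<^bsub>A\<^esub>}"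

end

theory Submission
  imports Defs "HOL-Computational_Algebra.Primes"
begin


lemma (in comm_group) ord_mult_coprime:
  assumes x: "x \<in> carrier G" and y: "y \<in> carrier G" and cop: "coprime (ord x) (ord y)"
  shows "ord (x \<otimes> y) = ord x * ord y"
proof -
  let ?t = "ord (x \<otimes> y)"
  have xy: "x \<otimes> y \<in> carrier G" using x y by simp
  have t1: "x [^] ?t \<otimes> y [^] ?t = \<one>"
    by (metis nat_pow_distrib[OF x y] pow_ord_eq_1[OF xy])
  have "x [^] (?t * ord y) = \<one>"
  proof -
    have "(x [^] ?t \<otimes> y [^] ?t) [^] ord y = \<one>" using t1 by simp
    hence "(x [^] ?t) [^] ord y \<otimes> (y [^] ?t) [^] ord y = \<one>"
      by (simp add: x y nat_pow_distrib)
    moreover have "(y [^] ?t) [^] ord y = \<one>"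
      by (simp add: y nat_pow_pow) (metis y nat_pow_one nat_pow_pow pow_ord_eq_1 mult.commute)
    ultimately show ?thesis by (simp add: x nat_pow_pow)
  qed
  hence "ord x dvd ?t * ord y" using pow_eq_id x by blast
  hence dx: "ord x dvd ?t" using cop by (simp add: coprime_dvd_mult_left_iff)
  have "y [^] (?t * ord x) = \<one>"
  proof -
    have "(x [^] ?t \<otimes> y [^] ?t) [^] ord x = \<one>" using t1 by simp
    hence "(x [^] ?t) [^] ord x \<otimes> (y [^] ?t) [^] ord x = \<one>"
      by (simp add: x y nat_pow_distrib)
    moreover have "(x [^] ?t) [^] ord x = \<one>"
      by (metis x nat_pow_one nat_pow_pow pow_ord_eq_1 mult.commute)
    ultimately show ?thesis by (simp add: y nat_pow_pow)
  qed
  hence "ord y dvd ?t * ord x" using pow_eq_id y by blast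
  hence dy: "ord y dvd ?t" using cop by (simp add: coprime_dvd_mult_left_iff coprime_commute)
  have "ord x * ord y dvd ?t" using dx dy cop by (simp add: divides_mult)
  moreover have "?t dvd ord x * ord y" by (rule abelian_ord_mul_divides[OF x y])
  ultimately show ?thesis by (metis dvd_antisym)
qed

lemma (in comm_group) exists_exponent_elem:
  fixes n :: nat
  assumes n: "n > 0" and ex: "\<forall>x\<in>carrier G. x [^] n = \<one>"
  shows "\<exists>h\<in>carrier G. \<forall>x\<in>carrier G. x [^] ord h = \<one>"
proof -
  have ordn: "ord x dvd n" if "x \<in> carrier G" for x using ex that pow_eq_id by blast
  have ordpos: "ord x > 0" if "x \<in> carrier G" for x using ordn[OF that] n by (metis dvd_0_left_iff gr0I)
  have sub: "ord ` carrier G \<subseteq> {..n}" using ordn n by (auto intro: dvd_imp_le)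
  have fin: "finite (ord ` carrier G)" using sub finite_subset by blast
  have ne: "ord ` carrier G \<noteq> {}" by auto
  define N where "N = Max (ord ` carrier G)"
  obtain h where h: "h \<in> carrier G" "ord h = N" using Max_in[OF fin ne] N_def by auto
  have maxN: "ord z \<le> N" if "z \<in> carrier G" for z using Max_ge[OF fin] that N_def by auto
  have "ord x dvd N" if x: "x \<in> carrier G" for x
  proof (rule ccontr)
    assume nd: "\<not> ord x dvd N"
    have Npos: "N > 0" using ordpos h by auto
    have ax: "ord x \<noteq> 0" using ordpos x by auto
    obtain p where p: "Factorial_Ring.prime p" "multiplicity p (ord x) > multiplicity p N"
      using nd multiplicity_le_imp_dvd[OF ax] by (meson not_le)
    define e where "e = multiplicity p (ord x)"
    define f where "f = multiplicity p N"
    have pe: "p ^ e dvd ord x" unfolding e_def by (rule multiplicity_dvd)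
    have pf: "p ^ f dvd N" unfolding f_def by (rule multiplicity_dvd)
    have p1: "p > 1" using p prime_gt_1_nat by blast
    define x' where "x' = x [^] (ord x div p ^ e)"
    define h' where "h' = h [^] (p ^ f)"
    have x'c: "x' \<in> carrier G" and h'c: "h' \<in> carrier G" using x h x'_def h'_def by auto
    have ox': "ord x' = p ^ e"
    proof -
      have d: "ord x div p ^ e dvd ord x" using pe by (metis dvd_div_mult_self dvd_triv_left)
      have nz: "ord x div p ^ e \<noteq> 0" using pe ax by (metis dvd_div_eq_0_iff)
      have "ord x' = ord x div (ord x div p ^ e)" unfolding x'_def using ord_pow[OF x d nz] .
      also have "\<dots> = p ^ e" using pe ax by (metis dvd_div_mult_self nonzero_mult_div_cancel_left div_0 mult_zero_left)
      finally show ?thesis .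
    qed
    have oh': "ord h' = N div p ^ f"
      unfolding h'_def using ord_pow[OF h(1)] h(2) pf p1 by simp
    have ndvd: "\<not> p dvd N div p ^ f" unfolding f_def using multiplicity_decompose[of N p] Npos p1 by simp
    have cop: "coprime (p ^ e) (N div p ^ f)"
      using ndvd p(1) by (simp add: prime_imp_coprime coprime_power_left_iff)
    have "ord (x' \<otimes> h') = p ^ e * (N div p ^ f)"
      using ord_mult_coprime[OF x'c h'c] ox' oh' cop by simp
    moreover have "p ^ e * (N div p ^ f) > N"
    proof -
      have ef: "e = f + (e - f)" "e - f > 0" using p(2) e_def f_def by auto
      have "p ^ e * (N div p ^ f) = p ^ (e - f) * (p ^ f * (N div p ^ f))"
        by (subst ef(1)) (simp add: power_add mult.assoc)
      also have "\<dots> = p ^ (e - f) * N" using pf by simp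
      finally have eq: "p ^ e * (N div p ^ f) = p ^ (e - f) * N" .
      have "p ^ (e - f) > 1" using p1 ef(2) one_less_power[of p "e - f"] by linarith
      thus ?thesis using eq Npos by simp
    qed
    ultimately show False using maxN[of "x' \<otimes> h'"] x'c h'c by simp
  qed
  hence "\<forall>x\<in>carrier G. x [^] ord h = \<one>" using h pow_eq_id by auto
  thus ?thesis using h by blast
qed



lemma mod_arith_aux:
  fixes k u u' d c j :: nat
  assumes k: "k > 0" and hyp: "(((k - 1) * u) mod k + u') mod k = (d * c) mod k"
  shows "(u + (j + d) * c) mod k = (u' + j * c) mod k"
proof -
  have "(u + (j + d) * c) mod k = (u + j * c + (d * c) mod k) mod k"
    by (metis mod_add_right_eq add.assoc distrib_right)
  also have "\<dots> = (u + j * c + (((k - 1) * u) mod k + u') mod k) mod k" using hyp by simp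
  also have "\<dots> = (u + j * c + (((k - 1) * u) + u')) mod k"
    by (metis mod_add_right_eq mod_add_left_eq)
  also have "\<dots> = (u + (k - 1) * u + (u' + j * c)) mod k"
    by (simp add: algebra_simps)
  also have "u + (k - 1) * u = k * u" using k by (cases k) auto
  also have "(k * u + (u' + j * c)) mod k = (u' + j * c) mod k" by simp
  finally show ?thesis .
qed

lemma (in group) pow_mod_exp:
  assumes x: "x \<in> carrier G" and e: "x [^] k = \<one>"
  shows "x [^] (i::nat) = x [^] (i mod k)"
proof -
  have "x [^] i = x [^] (k * (i div k) + i mod k)" by simp
  also have "\<dots> = (x [^] k) [^] (i div k) \<otimes> x [^] (i mod k)"
    using nat_pow_mult[OF x, of "k * (i div k)" "i mod k"] nat_pow_pow[OF x] by simp
  also have "\<dots> = x [^] (i mod k)" using e x by simp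
  finally show ?thesis .
qed

lemma (in group) pow_eq_iff_mod:
  assumes x: "x \<in> carrier G"
  shows "x [^] (i::nat) = x [^] (j::nat) \<longleftrightarrow> i mod ord x = j mod ord x"
proof -
  have "x [^] i = x [^] j \<longleftrightarrow> x [^] (int i) = x [^] (int j)" by (simp add: int_pow_int)
  also have "\<dots> \<longleftrightarrow> int (ord x) dvd (int j - int i)" using int_pow_eq[OF x] .
  also have "\<dots> \<longleftrightarrow> int j mod int (ord x) = int i mod int (ord x)" by (simp add: mod_eq_dvd_iff)
  also have "\<dots> \<longleftrightarrow> j mod ord x = i mod ord x" by (simp flip: of_nat_mod)
  finally show ?thesis by auto
qed

lemma (in comm_group) retraction_exists:
  assumes k: "k > 0" and ex: "\<forall>x\<in>carrier G. x [^] k = \<one>"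
    and h: "h \<in> carrier G" "ord h = k"
  shows "\<exists>r. (\<forall>x\<in>carrier G. r x < k) \<and>
             (\<forall>x\<in>carrier G. \<forall>y\<in>carrier G. r (x \<otimes> y) = (r x + r y) mod k) \<and> r h = 1 mod k"
proof -
  define P where "P \<Gamma> \<longleftrightarrow> \<Gamma> \<subseteq> carrier G \<times> {..<k} \<and> (h, 1 mod k) \<in> \<Gamma> \<and>
      (\<forall>x u v. (x,u) \<in> \<Gamma> \<longrightarrow> (x,v) \<in> \<Gamma> \<longrightarrow> u = v) \<and>
      (\<forall>x u y v. (x,u) \<in> \<Gamma> \<longrightarrow> (y,v) \<in> \<Gamma> \<longrightarrow> (x \<otimes> y, (u + v) mod k) \<in> \<Gamma>)"
    for \<Gamma> :: "('a \<times> nat) set"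
  have Psub: "x \<in> carrier G \<and> u < k" if "P \<Gamma>" "(x,u) \<in> \<Gamma>" for \<Gamma> x u
    using that unfolding P_def by auto
  have Pfun: "u = v" if "P \<Gamma>" "(x,u) \<in> \<Gamma>" "(x,v) \<in> \<Gamma>" for \<Gamma> x u v
    using that unfolding P_def by blast
  have Pmult: "(x \<otimes> y, (u + v) mod k) \<in> \<Gamma>" if "P \<Gamma>" "(x,u) \<in> \<Gamma>" "(y,v) \<in> \<Gamma>" for \<Gamma> x u y v
    using that unfolding P_def by blast
  have Ph: "(h, 1 mod k) \<in> \<Gamma>" if "P \<Gamma>" for \<Gamma> using that unfolding P_def by blast
  have Ppow1: "(x [^] Suc n, (Suc n * u) mod k) \<in> \<Gamma>" if "P \<Gamma>" "(x,u) \<in> \<Gamma>" for \<Gamma> x u n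
  proof (induction n)
    case 0
    then show ?case using that Psub[OF that] by simp
  next
    case (Suc n)
    have "(x [^] Suc n \<otimes> x, ((Suc n * u) mod k + u) mod k) \<in> \<Gamma>"
      by (rule Pmult[OF that(1) Suc that(2)])
    moreover have "x [^] Suc n \<otimes> x = x [^] Suc (Suc n)" by simp
    moreover have "((Suc n * u) mod k + u) mod k = (Suc (Suc n) * u) mod k"
      by (simp add: mod_simps algebra_simps)
    ultimately show ?case by simp
  qed
  have Pone: "(\<one>, 0) \<in> \<Gamma>" if "P \<Gamma>" for \<Gamma>
  proof -
    have "(h [^] Suc (k - 1), (Suc (k - 1) * (1 mod k)) mod k) \<in> \<Gamma>" by (rule Ppow1[OF that Ph[OF that]])
    thus ?thesis using k ex h by simp
  qed
  have Ppow: "(x [^] n, (n * u) mod k) \<in> \<Gamma>" if "P \<Gamma>" "(x,u) \<in> \<Gamma>" for \<Gamma> x u n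
  proof (cases n)
    case 0 then show ?thesis using Pone[OF that(1)] by simp
  next
    case (Suc m) then show ?thesis using Ppow1[OF that] by simp
  qed
  have inv_pow: "inv x = x [^] (k - 1)" if "x \<in> carrier G" for x
  proof (rule inv_equality)
    show "x [^] (k - 1) \<otimes> x = \<one>" using that ex k
      by (metis Suc_diff_1 nat_pow_Suc)
  qed (use that in auto)
  have Pinv: "(inv x, ((k - 1) * u) mod k) \<in> \<Gamma>" if "P \<Gamma>" "(x,u) \<in> \<Gamma>" for \<Gamma> x u
    using Ppow[OF that, of "k - 1"] inv_pow Psub[OF that] by simp
  define \<Gamma>0 where "\<Gamma>0 = {(h [^] (i::nat), i mod k) | i. True}"
  have P0: "P \<Gamma>0"
    unfolding P_def
  proof (intro conjI allI impI)
    show "\<Gamma>0 \<subseteq> carrier G \<times> {..<k}" using h k by (auto simp: \<Gamma>0_def)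
    show "(h, 1 mod k) \<in> \<Gamma>0" unfolding \<Gamma>0_def using h by (auto intro!: exI[of _ "1::nat"])
    fix x u v assume "(x,u) \<in> \<Gamma>0" "(x,v) \<in> \<Gamma>0"
    then obtain i j where "x = h [^] (i::nat)" "u = i mod k" "x = h [^] (j::nat)" "v = j mod k"
      unfolding \<Gamma>0_def by blast
    thus "u = v" using pow_eq_iff_mod[OF h(1)] h(2) by simp
  next
    fix x u y v assume "(x,u) \<in> \<Gamma>0" "(y,v) \<in> \<Gamma>0"
    then obtain i j where ij: "x = h [^] (i::nat)" "u = i mod k" "y = h [^] (j::nat)" "v = j mod k"
      unfolding \<Gamma>0_def by blast
    have "x \<otimes> y = h [^] (i + j)" using ij h by (simp add: nat_pow_mult)
    moreover have "(u + v) mod k = (i + j) mod k" using ij by (simp add: mod_simps)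
    ultimately show "(x \<otimes> y, (u + v) mod k) \<in> \<Gamma>0" unfolding \<Gamma>0_def by blast
  qed
  define AA where "AA = {\<Gamma>. P \<Gamma>}"
  have "\<exists>M\<in>AA. \<forall>XX\<in>AA. M \<subseteq> XX \<longrightarrow> XX = M"
  proof (rule Zorn_Lemma2, intro ballI)
    fix C assume C: "C \<in> chains AA"
    show "\<exists>U\<in>AA. \<forall>XX\<in>C. XX \<subseteq> U"
    proof (cases "C = {}")
      case True then show ?thesis using P0 AA_def by auto
    next
      case False
      have CP: "P XX" if "XX \<in> C" for XX using chainsD2[OF C] that AA_def by auto
      have cmp: "XX \<subseteq> Y \<or> Y \<subseteq> XX" if "XX \<in> C" "Y \<in> C" for XX Y using chainsD[OF C that] .
      have "P (\<Union>C)"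
        unfolding P_def
      proof (intro conjI allI impI)
        show "\<Union>C \<subseteq> carrier G \<times> {..<k}" using CP unfolding P_def by blast
        show "(h, 1 mod k) \<in> \<Union>C" using CP Ph False by blast
        fix x u v assume a: "(x,u) \<in> \<Union>C" "(x,v) \<in> \<Union>C"
        then obtain XX Y where XY: "XX \<in> C" "Y \<in> C" "(x,u) \<in> XX" "(x,v) \<in> Y" by blast
        show "u = v"
        proof (cases "XX \<subseteq> Y")
          case True thus ?thesis using Pfun[OF CP[OF XY(2)], of x u v] XY by blast
        next
          case False
          hence "Y \<subseteq> XX" using cmp XY by blast
          thus ?thesis using Pfun[OF CP[OF XY(1)], of x u v] XY by blast
        qed
      next
        fix x u y v assume a: "(x,u) \<in> \<Union>C" "(y,v) \<in> \<Union>C"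
        then obtain XX Y where XY: "XX \<in> C" "Y \<in> C" "(x,u) \<in> XX" "(y,v) \<in> Y" by blast
        show "(x \<otimes> y, (u + v) mod k) \<in> \<Union>C"
        proof (cases "XX \<subseteq> Y")
          case True thus ?thesis using XY Pmult[OF CP[OF XY(2)], of x u y v] by blast
        next
          case False
          hence "Y \<subseteq> XX" using cmp XY by blast
          thus ?thesis using XY Pmult[OF CP[OF XY(1)], of x u y v] by blast
        qed
      qed
      thus ?thesis using AA_def by auto
    qed
  qed
  then obtain M where MA: "P M" and Mmax: "\<And>XX. P XX \<Longrightarrow> M \<subseteq> XX \<Longrightarrow> XX = M"
    unfolding AA_def by auto
  have total: "\<exists>u. (x,u) \<in> M" if x: "x \<in> carrier G" for x
  proof (rule ccontr)
    assume nx: "\<nexists>u. (x,u) \<in> M"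
    define inS where "inS y \<longleftrightarrow> (\<exists>u. (y,u) \<in> M)" for y
    have S1: "inS \<one>" unfolding inS_def using Pone[OF MA] by blast
    have Sc: "y \<in> carrier G" if ya: "inS y" for y
    proof -
      obtain u where "(y,u) \<in> M" using ya inS_def by blast
      thus ?thesis using Psub[OF MA] by blast
    qed
    have Sm: "inS (a \<otimes> b)" if ab: "inS a" "inS b" for a b
    proof -
      obtain u v where uv: "(a,u) \<in> M" "(b,v) \<in> M" using ab inS_def by blast
      show ?thesis unfolding inS_def by (rule exI, rule Pmult[OF MA uv])
    qed
    have Si: "inS (inv a)" if aa: "inS a" for a
    proof -
      obtain u where u: "(a,u) \<in> M" using aa inS_def by blast
      show ?thesis unfolding inS_def by (rule exI, rule Pinv[OF MA u])
    qed
    have Sp: "inS (a [^] (n::nat))" if aa: "inS a" for a n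
    proof -
      obtain u where u: "(a,u) \<in> M" using aa inS_def by blast
      show ?thesis unfolding inS_def by (rule exI, rule Ppow[OF MA u])
    qed
    define m where "m = (LEAST m::nat. 0 < m \<and> inS (x [^] m))"
    have k0: "0 < k \<and> inS (x [^] k)" using k ex x S1 by simp
    have "0 < m \<and> inS (x [^] m)" unfolding m_def using k0 by (rule LeastI)
    hence m: "0 < m" "inS (x [^] m)" by auto
    have mdvd: "m dvd i" if "inS (x [^] i)" for i
    proof -
      have eq: "x [^] i = x [^] (m * (i div m)) \<otimes> x [^] (i mod m)"
        using x by (simp add: nat_pow_mult)
      have "inS (x [^] (m * (i div m)))" using Sp[OF m(2)] x by (simp add: nat_pow_pow)
      hence "inS (inv (x [^] (m * (i div m))) \<otimes> x [^] i)" by (rule Sm[OF Si that])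
      also have "inv (x [^] (m * (i div m))) \<otimes> x [^] i = x [^] (i mod m)"
        using eq x by (simp add: m_assoc[symmetric])
      finally have r: "inS (x [^] (i mod m))" .
      have "i mod m < m" using m(1) by simp
      hence "\<not> (0 < i mod m \<and> inS (x [^] (i mod m)))"
        using not_less_Least[of "i mod m" "\<lambda>m::nat. 0 < m \<and> inS (x [^] m)"] m_def by blast
      thus ?thesis using r by auto
    qed
    obtain w where w: "(x [^] m, w) \<in> M" using m(2) inS_def by blast
    have mk: "m dvd k" using mdvd ex x S1 by simp
    define q where "q = k div m"
    have kq: "k = m * q" using mk q_def by simp
    have qpos: "q > 0" using k kq by simp
    have "((x [^] m) [^] q, (q * w) mod k) \<in> M" by (rule Ppow[OF MA w])
    moreover have "(x [^] m) [^] q = \<one>" using x ex kq by (simp add: nat_pow_pow)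
    ultimately have "(\<one>, (q * w) mod k) \<in> M" by simp
    hence "(q * w) mod k = 0" using Pfun[OF MA _ Pone[OF MA]] by blast
    hence "m * q dvd q * w" using kq by (simp add: mod_eq_0_iff_dvd)
    hence "m dvd w" using qpos by (simp add: mult.commute)
    then obtain c where c: "w = m * c" by blast
    have V: "v = (i * c) mod k" if "(x [^] i, v) \<in> M" for i v
    proof -
      have "m dvd i" using mdvd that inS_def by blast
      then obtain t where t: "i = m * t" by blast
      have "((x [^] m) [^] t, (t * w) mod k) \<in> M" by (rule Ppow[OF MA w])
      hence "(x [^] i, (t * w) mod k) \<in> M" using t x by (simp add: nat_pow_pow)
      hence "v = (t * w) mod k" using Pfun[OF MA that] by blast
      thus ?thesis using t c by (simp add: algebra_simps)
    qed
    define M' where "M' = {(s \<otimes> x [^] (i::nat), (u + i * c) mod k) | s u i. (s,u) \<in> M}"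
    have memM': "(s \<otimes> x [^] (i::nat), (u + i * c) mod k) \<in> M'" if "(s,u) \<in> M" for s u i
      unfolding M'_def using that by blast
    have funaux: "(u + i * c) mod k = (u' + j * c) mod k"
      if su: "(s,u) \<in> M" "(s',u') \<in> M" and eq: "s \<otimes> x [^] i = s' \<otimes> x [^] j" and ji: "j \<le> i"
      for s u s' u' i j
    proof -
      define d where "d = i - j"
      have i: "i = j + d" using ji d_def by simp
      have sc: "s \<in> carrier G" "s' \<in> carrier G" using su Psub[OF MA] by auto
      have "s \<otimes> x [^] d \<otimes> x [^] j = s' \<otimes> x [^] j"
        using eq i x sc by (simp add: m_assoc nat_pow_mult add.commute)
      hence "s \<otimes> x [^] d = s'" using x sc by simp
      hence xd: "x [^] d = inv s \<otimes> s'" using x sc by (metis inv_solve_left nat_pow_closed)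
      have "(inv s \<otimes> s', (((k - 1) * u) mod k + u') mod k) \<in> M"
        by (rule Pmult[OF MA Pinv[OF MA su(1)] su(2)])
      hence "(((k - 1) * u) mod k + u') mod k = (d * c) mod k" using V xd by simp
      from mod_arith_aux[OF k this] show ?thesis using i by simp
    qed
    have PM': "P M'"
      unfolding P_def
    proof (intro conjI allI impI)
      show "M' \<subseteq> carrier G \<times> {..<k}" unfolding M'_def using Psub[OF MA] x k by auto
      have e: "(h \<otimes> x [^] (0::nat), (1 mod k + 0 * c) mod k) = (h, 1 mod k)" using h by simp
      show "(h, 1 mod k) \<in> M'" by (subst e[symmetric]) (rule memM'[OF Ph[OF MA]])
    next
      fix y u v assume a: "(y,u) \<in> M'" "(y,v) \<in> M'"
      then obtain s1 u1 i1 s2 u2 i2 where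
        b: "(s1,u1) \<in> M" "y = s1 \<otimes> x [^] (i1::nat)" "u = (u1 + i1 * c) mod k"
           "(s2,u2) \<in> M" "y = s2 \<otimes> x [^] (i2::nat)" "v = (u2 + i2 * c) mod k"
        unfolding M'_def by blast
      show "u = v"
      proof (cases "i2 \<le> i1")
        case True thus ?thesis using funaux[OF b(1) b(4), of i1 i2] b(2,3,5,6) by simp
      next
        case False thus ?thesis using funaux[OF b(4) b(1), of i2 i1] b(2,3,5,6) by simp
      qed
    next
      fix y u z v assume a: "(y,u) \<in> M'" "(z,v) \<in> M'"
      then obtain s1 u1 i1 s2 u2 i2 where
        b: "(s1,u1) \<in> M" "y = s1 \<otimes> x [^] (i1::nat)" "u = (u1 + i1 * c) mod k"
           "(s2,u2) \<in> M" "z = s2 \<otimes> x [^] (i2::nat)" "v = (u2 + i2 * c) mod k"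
        unfolding M'_def by blast
      have sc: "s1 \<in> carrier G" "s2 \<in> carrier G" using b Psub[OF MA] by auto
      have "(s1 \<otimes> s2 \<otimes> x [^] (i1 + i2), ((u1 + u2) mod k + (i1 + i2) * c) mod k) \<in> M'"
        by (rule memM'[OF Pmult[OF MA b(1) b(4)]])
      moreover have "s1 \<otimes> s2 \<otimes> x [^] (i1 + i2) = y \<otimes> z"
        using b sc x by (simp add: nat_pow_mult[symmetric] m_ac)
      moreover have "((u1 + u2) mod k + (i1 + i2) * c) mod k = (u + v) mod k"
      proof -
        have 1: "((u1 + u2) mod k + (i1 + i2) * c) mod k = (u1 + u2 + (i1 + i2) * c) mod k"
          by (simp add: mod_add_left_eq)
        have 2: "(u + v) mod k = ((u1 + i1 * c) + (u2 + i2 * c)) mod k"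
          using b(3,6) by (simp add: mod_add_eq)
        have 3: "u1 + u2 + (i1 + i2) * c = (u1 + i1 * c) + (u2 + i2 * c)" by (simp add: algebra_simps)
        show ?thesis using 1 2 3 by simp
      qed
      ultimately show "(y \<otimes> z, (u + v) mod k) \<in> M'" by simp
    qed
    have sub: "M \<subseteq> M'"
    proof
      fix p assume p: "p \<in> M"
      obtain s u where su: "p = (s,u)" by (cases p)
      have "(s \<otimes> x [^] (0::nat), (u + 0 * c) mod k) \<in> M'" using memM' p su by blast
      thus "p \<in> M'" using su p Psub[OF MA] by simp
    qed
    have "(\<one> \<otimes> x [^] (1::nat), (0 + 1 * c) mod k) \<in> M'" by (rule memM'[OF Pone[OF MA]])
    hence "(x, c mod k) \<in> M'" using x by simp
    moreover have "M' = M" using Mmax[OF PM' sub] .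
    ultimately show False using nx by blast
  qed
  define r where "r y = (THE u. (y,u) \<in> M)" for y
  have rM: "(y, r y) \<in> M" if y: "y \<in> carrier G" for y
  proof -
    obtain u where u: "(y,u) \<in> M" using total[OF y] by blast
    have "r y = u" unfolding r_def by (rule the_equality, rule u, rule Pfun[OF MA _ u])
    thus ?thesis using u by simp
  qed
  have runiq: "r y = u" if yu: "(y,u) \<in> M" for y u
  proof -
    have yc: "y \<in> carrier G" using Psub[OF MA yu] by simp
    show ?thesis using Pfun[OF MA rM[OF yc] yu] by simp
  qed
  show ?thesis
  proof (intro exI[of _ r] conjI ballI)
    fix y assume "y \<in> carrier G" thus "r y < k" using Psub[OF MA rM] by blast
  next
    fix y z assume yz: "y \<in> carrier G" "z \<in> carrier G"
    show "r (y \<otimes> z) = (r y + r z) mod k" by (rule runiq[OF Pmult[OF MA rM[OF yz(1)] rM[OF yz(2)]]])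
  next
    show "r h = 1 mod k" by (rule runiq[OF Ph[OF MA]])
  qed
qed



lemma (in comm_group) hom_ext:
  assumes k: "k > 0" and ex: "\<forall>x\<in>carrier G. x [^] k = \<one>"
    and h: "h \<in> carrier G" "ord h = k"
    and M: "group M" "a \<in> carrier M" "a [^]\<^bsub>M\<^esub> k = \<one>\<^bsub>M\<^esub>"
  shows "\<exists>\<psi>. \<psi> \<in> hom G M \<and> \<psi> h = a \<and> (\<forall>x\<in>carrier G. \<exists>i::nat. \<psi> x = a [^]\<^bsub>M\<^esub> i)"
proof -
  obtain r where r: "\<forall>x\<in>carrier G. r x < k"
    "\<forall>x\<in>carrier G. \<forall>y\<in>carrier G. r (x \<otimes> y) = (r x + r y) mod k" "r h = 1 mod k"
    using retraction_exists[OF k ex h] by blast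
  interpret M: group M by (rule M(1))
  define \<psi> where "\<psi> x = a [^]\<^bsub>M\<^esub> r x" for x
  have "\<psi> \<in> hom G M"
  proof (rule homI)
    fix x assume "x \<in> carrier G" thus "\<psi> x \<in> carrier M" using M(2) \<psi>_def by simp
  next
    fix x y assume xy: "x \<in> carrier G" "y \<in> carrier G"
    have "\<psi> (x \<otimes> y) = a [^]\<^bsub>M\<^esub> ((r x + r y) mod k)" using r(2) xy \<psi>_def by simp
    also have "\<dots> = a [^]\<^bsub>M\<^esub> (r x + r y)" using M.pow_mod_exp[OF M(2) M(3)] by simp
    also have "\<dots> = \<psi> x \<otimes>\<^bsub>M\<^esub> \<psi> y" using M(2) \<psi>_def by (simp add: M.nat_pow_mult)
    finally show "\<psi> (x \<otimes> y) = \<psi> x \<otimes>\<^bsub>M\<^esub> \<psi> y" .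
  qed
  moreover have "\<psi> h = a"
  proof -
    have "\<psi> h = a [^]\<^bsub>M\<^esub> (1 mod k)" using r(3) \<psi>_def by simp
    also have "\<dots> = a [^]\<^bsub>M\<^esub> (1::nat)" using M.pow_mod_exp[OF M(2) M(3), of 1] by simp
    finally show ?thesis using M(2) by simp
  qed
  moreover have "\<forall>x\<in>carrier G. \<exists>i::nat. \<psi> x = a [^]\<^bsub>M\<^esub> i" using \<psi>_def by blast
  ultimately show ?thesis by blast
qed

lemma pow_upd: "x [^]\<^bsub>A\<lparr>carrier := H\<rparr>\<^esub> (n::nat) = x [^]\<^bsub>A\<^esub> n"
  by (simp add: nat_pow_def)

lemma sub_comm_group:
  assumes "comm_group A" "subgroup H A"
  shows "comm_group (A\<lparr>carrier := H\<rparr>)"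
proof -
  interpret A: comm_group A by (rule assms(1))
  have g: "group (A\<lparr>carrier := H\<rparr>)" by (rule subgroup.subgroup_is_group[OF assms(2) A.is_group])
  show ?thesis
  proof (rule group.group_comm_groupI[OF g])
    fix x y assume "x \<in> carrier (A\<lparr>carrier := H\<rparr>)" "y \<in> carrier (A\<lparr>carrier := H\<rparr>)"
    hence "x \<in> carrier A" "y \<in> carrier A" using subgroup.subset[OF assms(2)] by auto
    thus "x \<otimes>\<^bsub>A\<lparr>carrier := H\<rparr>\<^esub> y = y \<otimes>\<^bsub>A\<lparr>carrier := H\<rparr>\<^esub> x" using A.m_comm by simp
  qed
qed

lemma torsion_char:
  assumes cg: "comm_group A" and fin: "finite (carrier A)" and sub: "subgroup H A"
    and inv: "\<forall>g\<in>hom (A\<lparr>carrier := H\<rparr>) A. \<forall>x\<in>H. g x \<in> H"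
  shows "\<exists>k::nat. k \<ge> 1 \<and> H = torsion_subgroup A k"
proof -
  interpret A: comm_group A by (rule cg)
  let ?H = "A\<lparr>carrier := H\<rparr>"
  interpret H: comm_group ?H by (rule sub_comm_group[OF cg sub])
  have Hsub: "H \<subseteq> carrier A" using subgroup.subset[OF sub] .
  have finH: "finite (carrier ?H)" using fin Hsub finite_subset by auto
  have npos: "order ?H > 0" using finH H.one_closed unfolding order_def
    by (metis card_gt_0_iff empty_iff)
  have ex1: "\<forall>x\<in>carrier ?H. x [^]\<^bsub>?H\<^esub> order ?H = \<one>\<^bsub>?H\<^esub>" using H.pow_order_eq_1 by blast
  obtain h where h: "h \<in> carrier ?H" "\<forall>x\<in>carrier ?H. x [^]\<^bsub>?H\<^esub> H.ord h = \<one>\<^bsub>?H\<^esub>"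
    using H.exists_exponent_elem[OF npos ex1] by blast
  define k where "k = H.ord h"
  have k1: "k \<ge> 1" using H.ord_ge_1[OF finH h(1)] k_def by simp
  have "H = torsion_subgroup A k"
  proof
    show "H \<subseteq> torsion_subgroup A k"
      using h(2) Hsub unfolding torsion_subgroup_def k_def by (auto simp: pow_upd)
  next
    show "torsion_subgroup A k \<subseteq> H"
    proof
      fix a assume "a \<in> torsion_subgroup A k"
      hence a: "a \<in> carrier A" "a [^]\<^bsub>A\<^esub> k = \<one>\<^bsub>A\<^esub>" unfolding torsion_subgroup_def by auto
      have ex: "\<forall>x\<in>carrier ?H. x [^]\<^bsub>?H\<^esub> k = \<one>\<^bsub>?H\<^esub>" using h(2) k_def by simp
      obtain \<psi> where "\<psi> \<in> hom ?H A" "\<psi> h = a"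
        using H.hom_ext[OF _ ex h(1) k_def[symmetric] A.is_group a] k1 by auto
      thus "a \<in> H" using inv h(1) by force
    qed
  qed
  thus ?thesis using k1 by blast
qed

lemma restrict_hom:
  assumes "g \<in> hom G M" "monoid G" shows "restrict g (carrier G) \<in> hom G M"
  using assms(1) monoid.m_closed[OF assms(2)] unfolding hom_def by (auto simp: Pi_def)

lemma cellular_imp_inv:
  assumes cc: "cellular_cover (A\<lparr>carrier := H\<rparr>) A id" and gr: "group (A\<lparr>carrier := H\<rparr>)"
  shows "\<forall>g\<in>hom (A\<lparr>carrier := H\<rparr>) A. \<forall>x\<in>H. g x \<in> H"
proof (intro ballI)
  fix g x assume g: "g \<in> hom (A\<lparr>carrier := H\<rparr>) A" and x: "x \<in> H"
  let ?H = "A\<lparr>carrier := H\<rparr>"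
  have bij: "bij_betw (\<lambda>f. restrict (\<lambda>x. id (f x)) H) (hom ?H ?H \<inter> extensional H) (hom ?H A \<inter> extensional H)"
    using cc unfolding cellular_cover_def by simp
  have "restrict g H \<in> hom ?H A \<inter> extensional H" using restrict_hom[OF g group.is_monoid[OF gr]] by simp
  then obtain f where f: "f \<in> hom ?H ?H \<inter> extensional H" "restrict (\<lambda>x. id (f x)) H = restrict g H"
    using bij_betw_imp_surj_on[OF bij] by (metis (no_types, lifting) imageE)
  have "f x = g x" using fun_cong[OF f(2), of x] x by simp
  moreover have "f x \<in> H" using f(1) x unfolding hom_def by auto
  ultimately show "g x \<in> H" by simp
qed

lemma inv_imp_cellular:
  assumes sub: "subgroup H A" and inv: "\<forall>g\<in>hom (A\<lparr>carrier := H\<rparr>) A. \<forall>x\<in>H. g x \<in> H"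
  shows "cellular_cover (A\<lparr>carrier := H\<rparr>) A id"
proof -
  let ?H = "A\<lparr>carrier := H\<rparr>"
  have Hsub: "H \<subseteq> carrier A" using subgroup.subset[OF sub] .
  have idh: "id \<in> hom ?H A" using Hsub unfolding hom_def by auto
  have DT: "hom ?H ?H = hom ?H A"
  proof
    show "hom ?H ?H \<subseteq> hom ?H A" using Hsub unfolding hom_def by auto
    show "hom ?H A \<subseteq> hom ?H ?H"
    proof
      fix g assume g: "g \<in> hom ?H A"
      thus "g \<in> hom ?H ?H" using inv unfolding hom_def by auto
    qed
  qed
  have "bij_betw (\<lambda>f. restrict (\<lambda>x. id (f x)) H) (hom ?H ?H \<inter> extensional H) (hom ?H A \<inter> extensional H)"
  proof -
    have "bij_betw (\<lambda>f. restrict (\<lambda>x. id (f x)) H) (hom ?H ?H \<inter> extensional H) (hom ?H ?H \<inter> extensional H)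
        = bij_betw id (hom ?H ?H \<inter> extensional H) (hom ?H ?H \<inter> extensional H)"
      by (rule bij_betw_cong) (auto simp: extensional_restrict)
    thus ?thesis using DT by simp
  qed
  thus ?thesis unfolding cellular_cover_def using idh by simp
qed

lemma torsion_inv:
  assumes cg: "comm_group A" and H: "H = torsion_subgroup A k"
  shows "\<forall>g\<in>hom (A\<lparr>carrier := H\<rparr>) A. \<forall>x\<in>H. g x \<in> H"
proof (intro ballI)
  interpret A: comm_group A by (rule cg)
  fix g x assume g: "g \<in> hom (A\<lparr>carrier := H\<rparr>) A" and x: "x \<in> H"
  have sub: "subgroup H A"
  proof (rule A.subgroupI)
    show "H \<subseteq> carrier A" using H unfolding torsion_subgroup_def by auto
    show "H \<noteq> {}" using H unfolding torsion_subgroup_def by auto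
  next
    fix a assume "a \<in> H" thus "inv\<^bsub>A\<^esub> a \<in> H" using H unfolding torsion_subgroup_def
      by (auto simp: A.nat_pow_inv)
  next
    fix a b assume "a \<in> H" "b \<in> H" thus "a \<otimes>\<^bsub>A\<^esub> b \<in> H" using H unfolding torsion_subgroup_def
      by (auto simp: A.nat_pow_distrib)
  qed
  interpret Hg: group "A\<lparr>carrier := H\<rparr>" by (rule subgroup.subgroup_is_group[OF sub A.is_group])
  have "g x \<in> carrier A" using g x unfolding hom_def by auto
  moreover have "g x [^]\<^bsub>A\<^esub> k = \<one>\<^bsub>A\<^esub>"
  proof -
    have "g x [^]\<^bsub>A\<^esub> k = g (x [^]\<^bsub>A\<lparr>carrier := H\<rparr>\<^esub> k)"
      using hom_nat_pow[OF g _ Hg.is_group A.is_group, of x k] x by simp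
    also have "x [^]\<^bsub>A\<lparr>carrier := H\<rparr>\<^esub> k = \<one>\<^bsub>A\<lparr>carrier := H\<rparr>\<^esub>"
      using x H unfolding torsion_subgroup_def by (simp add: pow_upd)
    also have "g \<one>\<^bsub>A\<lparr>carrier := H\<rparr>\<^esub> = \<one>\<^bsub>A\<^esub>"
      using hom_one[OF g Hg.is_group A.is_group] .
    finally show ?thesis .
  qed
  ultimately show "g x \<in> H" using H unfolding torsion_subgroup_def by simp
qed



lemma cover_part2:
  fixes A :: "('a, 'n) monoid_scheme" and B :: "('b, 'm) monoid_scheme"
  assumes cg: "comm_group A" and fin: "finite (carrier A)" and gB: "group B"
    and cc: "cellular_cover B A c"
  shows "\<exists>k::nat. k \<ge> 1 \<and>
              (\<exists>h. h \<in> iso B (A\<lparr>carrier := torsion_subgroup A k\<rparr>) \<and>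
                   (\<forall>x \<in> carrier B. id (h x) = c x))"
proof -
  interpret A: comm_group A by (rule cg)
  interpret B: group B by (rule gB)
  define F where "F f = restrict (\<lambda>x. c (f x)) (carrier B)" for f :: "'b \<Rightarrow> 'b"
  define D where "D = hom B B \<inter> extensional (carrier B)"
  define T where "T = hom B A \<inter> extensional (carrier B)"
  have chom: "c \<in> hom B A" using cc unfolding cellular_cover_def by simp
  have bij: "bij_betw F D T" using cc unfolding cellular_cover_def F_def D_def T_def by simp
  have injF: "\<And>f g. f \<in> D \<Longrightarrow> g \<in> D \<Longrightarrow> F f = F g \<Longrightarrow> f = g"
    using bij_betw_imp_inj_on[OF bij] unfolding inj_on_def by blast
  have surjF: "\<And>g. g \<in> T \<Longrightarrow> \<exists>f\<in>D. F f = g" using bij_betw_imp_surj_on[OF bij] by force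
  interpret cH: group_hom B A c using chom gB A.is_group by (simp add: group_hom_def group_hom_axioms_def)
  have cc1: "c x \<in> carrier A" if "x \<in> carrier B" for x using chom that unfolding hom_def by auto
  define idB where "idB = restrict (\<lambda>y. y) (carrier B)"
  define kap where "kap = restrict (\<lambda>y. \<one>\<^bsub>B\<^esub>) (carrier B)"
  have idD: "idB \<in> D" unfolding D_def idB_def hom_def by auto
  have kapD: "kap \<in> D" unfolding D_def kap_def hom_def by auto
  have Fkap: "F kap = restrict (\<lambda>y. \<one>\<^bsub>A\<^esub>) (carrier B)" unfolding F_def kap_def by auto
  have comm: "x \<otimes>\<^bsub>B\<^esub> y = y \<otimes>\<^bsub>B\<^esub> x" if xy: "x \<in> carrier B" "y \<in> carrier B" for x y
  proof -
    define \<phi> where "\<phi> = restrict (\<lambda>z. x \<otimes>\<^bsub>B\<^esub> z \<otimes>\<^bsub>B\<^esub> inv\<^bsub>B\<^esub> x) (carrier B)"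
    have cancel: "inv\<^bsub>B\<^esub> x \<otimes>\<^bsub>B\<^esub> (x \<otimes>\<^bsub>B\<^esub> w) = w" if "w \<in> carrier B" for w
      using that xy(1) by (simp add: B.m_assoc[symmetric])
    have "\<phi> \<in> D" unfolding D_def \<phi>_def hom_def using xy(1)
      by (auto simp: B.m_assoc cancel)
    moreover have "F \<phi> = F idB"
    proof
      fix z show "F \<phi> z = F idB z"
      proof (cases "z \<in> carrier B")
        case True
        have "c (x \<otimes>\<^bsub>B\<^esub> z \<otimes>\<^bsub>B\<^esub> inv\<^bsub>B\<^esub> x) = c x \<otimes>\<^bsub>A\<^esub> c z \<otimes>\<^bsub>A\<^esub> inv\<^bsub>A\<^esub> c x"
          using True xy by (simp add: cH.hom_inv)
        also have "\<dots> = c z"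
        proof -
          have "c x \<otimes>\<^bsub>A\<^esub> c z \<otimes>\<^bsub>A\<^esub> inv\<^bsub>A\<^esub> c x = c z \<otimes>\<^bsub>A\<^esub> (c x \<otimes>\<^bsub>A\<^esub> inv\<^bsub>A\<^esub> c x)"
            using True xy cc1 by (simp add: A.m_comm A.m_assoc[symmetric])
          thus ?thesis using True xy cc1 by simp
        qed
        finally show ?thesis using True unfolding F_def \<phi>_def idB_def by simp
      qed (simp add: F_def)
    qed
    ultimately have "\<phi> = idB" using injF idD by blast
    hence "\<phi> y = idB y" by simp
    hence "x \<otimes>\<^bsub>B\<^esub> y \<otimes>\<^bsub>B\<^esub> inv\<^bsub>B\<^esub> x = y" using xy
      unfolding \<phi>_def idB_def by simp
    thus ?thesis using xy by (metis B.inv_solve_right B.m_closed B.inv_closed B.inv_inv)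
  qed
  have cB: "comm_group B" by (rule B.group_comm_groupI) (use comm in auto)
  interpret cB: comm_group B by (rule cB)
  define n where "n = order A"
  have npos: "n > 0" using fin A.one_closed unfolding n_def order_def by (metis card_gt_0_iff empty_iff)
  have expB: "\<forall>y\<in>carrier B. y [^]\<^bsub>B\<^esub> n = \<one>\<^bsub>B\<^esub>"
  proof
    fix y assume y: "y \<in> carrier B"
    define \<psi> where "\<psi> = restrict (\<lambda>z. z [^]\<^bsub>B\<^esub> n) (carrier B)"
    have "\<psi> \<in> D" unfolding D_def \<psi>_def hom_def by (auto simp: cB.nat_pow_distrib)
    moreover have "F \<psi> = F kap"
    proof
      fix z show "F \<psi> z = F kap z"
        unfolding F_def \<psi>_def kap_def n_def
        by (auto simp: cH.hom_nat_pow cc1 A.pow_order_eq_1)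
    qed
    ultimately have "\<psi> = kap" using injF kapD by blast
    hence "\<psi> y = kap y" by simp
    thus "y [^]\<^bsub>B\<^esub> n = \<one>\<^bsub>B\<^esub>" using y unfolding \<psi>_def kap_def by simp
  qed
  obtain h where h: "h \<in> carrier B" "\<forall>x\<in>carrier B. x [^]\<^bsub>B\<^esub> group.ord B h = \<one>\<^bsub>B\<^esub>"
    using cB.exists_exponent_elem[OF npos expB] by blast
  define k where "k = group.ord B h"
  have kpos: "k > 0"
  proof -
    have "k dvd n" using expB h(1) B.pow_eq_id k_def by blast
    thus ?thesis using npos by (metis dvd_0_left_iff gr0I)
  qed
  have ker: "y = \<one>\<^bsub>B\<^esub>" if y: "y \<in> carrier B" "c y = \<one>\<^bsub>A\<^esub>" for y
  proof -
    have yk: "y [^]\<^bsub>B\<^esub> k = \<one>\<^bsub>B\<^esub>" using h(2) y k_def by simp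
    have ex: "\<forall>x\<in>carrier B. x [^]\<^bsub>B\<^esub> k = \<one>\<^bsub>B\<^esub>" using h(2) k_def by simp
    obtain \<psi> where \<psi>: "\<psi> \<in> hom B B" "\<psi> h = y" "\<forall>x\<in>carrier B. \<exists>i::nat. \<psi> x = y [^]\<^bsub>B\<^esub> i"
      using cB.hom_ext[OF kpos ex h(1) k_def[symmetric] gB y(1) yk] by blast
    define \<psi>' where "\<psi>' = restrict \<psi> (carrier B)"
    have "\<psi>' \<in> D" unfolding D_def \<psi>'_def using restrict_hom[OF \<psi>(1) B.is_monoid] by simp
    moreover have "F \<psi>' = F kap"
    proof
      fix z show "F \<psi>' z = F kap z"
      proof (cases "z \<in> carrier B")
        case True
        then obtain i where i: "\<psi> z = y [^]\<^bsub>B\<^esub> (i::nat)" using \<psi>(3) by blast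
        have "c (\<psi> z) = \<one>\<^bsub>A\<^esub>" using i y by (simp add: cH.hom_nat_pow)
        thus ?thesis using True unfolding F_def \<psi>'_def kap_def by simp
      qed (simp add: F_def)
    qed
    ultimately have "\<psi>' = kap" using injF kapD by blast
    hence "\<psi>' h = kap h" by simp
    hence "\<psi> h = \<one>\<^bsub>B\<^esub>" using h(1) unfolding \<psi>'_def kap_def by simp
    thus ?thesis using \<psi>(2) by simp
  qed
  have injc: "inj_on c (carrier B)"
  proof (rule inj_onI)
    fix x z assume xz: "x \<in> carrier B" "z \<in> carrier B" "c x = c z"
    have "c (x \<otimes>\<^bsub>B\<^esub> inv\<^bsub>B\<^esub> z) = \<one>\<^bsub>A\<^esub>" using xz cc1 by (simp add: cH.hom_inv)
    hence "x \<otimes>\<^bsub>B\<^esub> inv\<^bsub>B\<^esub> z = \<one>\<^bsub>B\<^esub>" using ker xz by simp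
    thus "x = z" using xz by (metis B.inv_equality B.inv_inv B.inv_closed)
  qed
  define I where "I = c ` carrier B"
  have subI: "subgroup I A" unfolding I_def by (rule cH.img_is_subgroup)
  have invI: "\<forall>g\<in>hom (A\<lparr>carrier := I\<rparr>) A. \<forall>x\<in>I. g x \<in> I"
  proof (intro ballI)
    fix g x assume g: "g \<in> hom (A\<lparr>carrier := I\<rparr>) A" and x: "x \<in> I"
    obtain b where b: "b \<in> carrier B" "x = c b" using x I_def by blast
    have "restrict (\<lambda>y. g (c y)) (carrier B) \<in> T"
      unfolding T_def using g I_def cc1 unfolding hom_def by (auto simp: cH.hom_mult)
    then obtain f where f: "f \<in> D" "F f = restrict (\<lambda>y. g (c y)) (carrier B)" using surjF by blast
    have "c (f b) = g x" using fun_cong[OF f(2), of b] b unfolding F_def by simp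
    moreover have "f b \<in> carrier B" using f(1) b unfolding D_def hom_def by auto
    ultimately show "g x \<in> I" unfolding I_def by force
  qed
  obtain k' where k': "k' \<ge> 1" "I = torsion_subgroup A k'"
    using torsion_char[OF cg fin subI invI] by blast
  have "c \<in> iso B (A\<lparr>carrier := I\<rparr>)"
    unfolding iso_def
  proof (intro CollectI conjI)
    show "c \<in> hom B (A\<lparr>carrier := I\<rparr>)" using chom I_def unfolding hom_def by auto
    show "bij_betw c (carrier B) (carrier (A\<lparr>carrier := I\<rparr>))" using injc I_def by (simp add: bij_betw_def)
  qed
  thus ?thesis using k' by auto
qed


theorem proposition4p5:
  fixes A :: "('a, 'n) monoid_scheme"
  assumes "comm_group A" and "finite (carrier A)"
  shows "(\<forall>H. subgroup H A \<longrightarrow>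
            (cellular_cover (A\<lparr>carrier := H\<rparr>) A id \<longleftrightarrow>
             (\<exists>k::nat. k \<ge> 1 \<and> H = torsion_subgroup A k)))
       \<and> (\<forall>(B :: ('b, 'm) monoid_scheme) c. group B \<longrightarrow> cellular_cover B A c \<longrightarrow>
            (\<exists>k::nat. k \<ge> 1 \<and>
              (\<exists>h. h \<in> iso B (A\<lparr>carrier := torsion_subgroup A k\<rparr>) \<and>
                   (\<forall>x \<in> carrier B. id (h x) = c x))))"
proof (intro conjI allI impI)
  fix H assume sub: "subgroup H A"
  have gr: "group (A\<lparr>carrier := H\<rparr>)"
    using subgroup.subgroup_is_group[OF sub comm_group.axioms(2)[OF assms(1)]] .
  show "cellular_cover (A\<lparr>carrier := H\<rparr>) A id \<longleftrightarrow> (\<exists>k::nat. k \<ge> 1 \<and> H = torsion_subgroup A k)"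
  proof
    assume "cellular_cover (A\<lparr>carrier := H\<rparr>) A id"
    from torsion_char[OF assms sub cellular_imp_inv[OF this gr]]
    show "\<exists>k::nat. k \<ge> 1 \<and> H = torsion_subgroup A k" .
  next
    assume "\<exists>k::nat. k \<ge> 1 \<and> H = torsion_subgroup A k"
    then obtain k where "H = torsion_subgroup A k" by blast
    from inv_imp_cellular[OF sub torsion_inv[OF assms(1) this]]
    show "cellular_cover (A\<lparr>carrier := H\<rparr>) A id" .
  qed
next
  fix B :: "('b, 'm) monoid_scheme" and c
  assume "group B" "cellular_cover B A c"
  from cover_part2[OF assms this]
  show "\<exists>k::nat. k \<ge> 1 \<and>
              (\<exists>h. h \<in> iso B (A\<lparr>carrier := torsion_subgroup A k\<rparr>) \<and>
                   (\<forall>x \<in> carrier B. id (h x) = c x))" .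
qed

end
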